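(* Let $(R,\mathfrak m)$ be a Noetherian local ring, let $I\subseteq R$ be an ideal and let $J=(f_1,\ldots,f_t)\subseteq I$ with $\nu_I(f_i)=1$ for $i=1,\ldots,t$. Consider the complex of graded $\mathrm{gr}_I(R)$-modules $$0\to \mathrm{gr}(\mathcal Z)\xrightarrow{\mathrm{gr}(i)}\mathrm{gr}(R^t)\xrightarrow{\mathrm{gr}(\mathfrak f)}\mathrm{gr}_I(R)\xrightarrow{\mathrm{gr}(\pi)}\mathrm{gr}_{I/J}(R/J)\to 0 \qquad ( * )$$ described in the context. The following are equivalent: (a) the natural surjection $\mathcal A_{R/J}(I/J)\to \mathcal R_{R/J}(I/J)$ is an isomorphism, i.e. $J\cap I^n=JI^{n-1}$ for all $n\ge 1$; (b) the complex $( * )$ is exact; (c) there exists a homogeneous system of generators of $\mathrm{Syz}(f_1^*,\ldots,f_t^* )$ each of whose elements is of the form $(\varphi\circ\psi)(a)$ for some $a\in\mathcal Z$.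
   Context: For $f\in R$, $\nu_I(f)$ is the largest $n$ with $f\in I^n$ ($\infty$ if none), and $f^*$ is the class of $f$ in $I^{\nu_I(f)}/I^{\nu_I(f)+1}\subseteq \mathrm{gr}_I(R)=\bigoplus_{n\ge0}I^n/I^{n+1}$ (with $f^*=0$ if $\nu_I(f)=\infty$). The Aluffi algebra is $\mathcal A_{R/J}(I/J)=\bigoplus_{n\ge0}I^n/JI^{n-1}$ (with $I^0=R$, $JI^{-1}:=J$ in degree 0), the Rees algebra is $\mathcal R_{R/J}(I/J)=\bigoplus_{n\ge0}I^n/(J\cap I^n)$, and the natural surjection is induced by identity on $I^n$. Let $\mathfrak f:R^t\to R$, $(a_1,\ldots,a_t)\mapsto\sum a_if_i$, let $\mathcal Z=\ker\mathfrak f$ (first syzygy module of $f_1,\dots,f_t$), $i:\mathcal Z\hookrightarrow R^t$ the inclusion and $\pi:R\to R/J$ the projection. Filter $R$ by $I^n$, $R^t$ by $F_nR^t=(I^{n-1})^{\oplus t}$ (with $I^{m}=R$ for $m\le 0$), $\mathcal Z$ by $F_n\mathcal Z=\mathcal Z\cap F_nR^t$, and $R/J$ by $(I/J)^n$. The associated graded modules are $\mathrm{gr}(M)=\bigoplus_n F_nM/F_{n+1}M$; $\mathrm{gr}(R^t)\cong\mathrm{gr}_I(R)(-1)^t$, $\mathrm{gr}(\mathfrak f)$ sends the $i$-th basis vector $e_i$ to $f_i^*$, $\mathrm{gr}(i)$ is induced by inclusion and $\mathrm{gr}(\pi)$ is the natural surjection. $\mathrm{Syz}(f_1^*,\dots,f_t^*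 )=\ker \mathrm{gr}(\mathfrak f)$. For $0\neq a=(a_1,\ldots,a_t)\in\mathcal Z$ with $m-1=\min_j\nu_I(a_j)$, $\psi(a)$ is the class of $a$ in $F_m\mathcal Z/F_{m+1}\mathcal Z$, and $\varphi:\mathrm{gr}(\mathcal Z)\hookrightarrow \mathrm{Syz}(f_1^*,\ldots,f_t^* )$ is the canonical embedding, so that $(\varphi\circ\psi)(a)=(\overline{a_1},\ldots,\overline{a_t})$ with $\overline{a_i}$ the class of $a_i$ in $I^{m-1}/I^m$. *)

theory Defs
  imports Main "HOL-Library.Extended_Nat"
begin

definition is_ideal :: "'a::comm_ring_1 set \<Rightarrow> bool" where
  "is_ideal I \<longleftrightarrow> 0 \<in> I \<and> (\<forall>x\<in>I. \<forall>y\<in>I. x + y \<in> I) \<and> (\<forall>r x. x \<in> I \<longrightarrow> r * x \<in> I)"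

definition ideal_gen :: "'a::comm_ring_1 set \<Rightarrow> 'a set" where
  "ideal_gen S = \<Inter>{K. is_ideal K \<and> S \<subseteq> K}"

definition ideal_mult :: "'a::comm_ring_1 set \<Rightarrow> 'a set \<Rightarrow> 'a set" where
  "ideal_mult I K = ideal_gen {x * y | x y. x \<in> I \<and> y \<in> K}"

fun ideal_pow :: "'a::comm_ring_1 set \<Rightarrow> nat \<Rightarrow> 'a set" where
  "ideal_pow I 0 = UNIV"
| "ideal_pow I (Suc n) = ideal_mult I (ideal_pow I n)"

definition set_plus_ideal :: "'a::comm_ring_1 set \<Rightarrow> 'a set \<Rightarrow> 'a set" where
  "set_plus_ideal A B = {x + y | x y. x \<in> A \<and> y \<in> B}"

definition noetherian_ring :: "'a::comm_ring_1 itself \<Rightarrow> bool" where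
  "noetherian_ring _ \<longleftrightarrow> (\<forall>K::'a set. is_ideal K \<longrightarrow> (\<exists>F. finite F \<and> K = ideal_gen F))"

definition maximal_ideal :: "'a::comm_ring_1 set \<Rightarrow> bool" where
  "maximal_ideal M \<longleftrightarrow> is_ideal M \<and> M \<noteq> UNIV \<and>
     (\<forall>K. is_ideal K \<longrightarrow> M \<subseteq> K \<longrightarrow> K = M \<or> K = UNIV)"

definition local_ring :: "'a::comm_ring_1 itself \<Rightarrow> bool" where
  "local_ring _ \<longleftrightarrow> (\<exists>!M::'a set. maximal_ideal M)"

definition nu :: "'a::comm_ring_1 set \<Rightarrow> 'a \<Rightarrow> enat" where
  "nu I x = (if \<forall>n. x \<in> ideal_pow I n then \<infinity> else enat (GREATEST n. x \<in> ideal_pow I n))"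

definition Rt :: "nat \<Rightarrow> (nat \<Rightarrow> 'a::comm_ring_1) set" where
  "Rt t = {a. \<forall>i\<ge>t. a i = 0}"

text \<open>F_n R^t = (I^(n-1))^t, with I^m = R for m <= 0 (nat subtraction truncates).\<close>
definition Fvec :: "'a::comm_ring_1 set \<Rightarrow> nat \<Rightarrow> nat \<Rightarrow> (nat \<Rightarrow> 'a) set" where
  "Fvec I t n = {a \<in> Rt t. \<forall>i<t. a i \<in> ideal_pow I (n - 1)}"

definition fmap :: "(nat \<Rightarrow> 'a::comm_ring_1) \<Rightarrow> nat \<Rightarrow> (nat \<Rightarrow> 'a) \<Rightarrow> 'a" where
  "fmap f t a = (\<Sum>i<t. a i * f i)"

definition Zmod :: "(nat \<Rightarrow> 'a::comm_ring_1) \<Rightarrow> nat \<Rightarrow> (nat \<Rightarrow> 'a) set" where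
  "Zmod f t = {a \<in> Rt t. fmap f t a = 0}"

definition FZ :: "'a::comm_ring_1 set \<Rightarrow> (nat \<Rightarrow> 'a) \<Rightarrow> nat \<Rightarrow> nat \<Rightarrow> (nat \<Rightarrow> 'a) set" where
  "FZ I f t n = Zmod f t \<inter> Fvec I t n"

text \<open>Degree n of gr(Z) -> gr(R^t) is injective:
  F_n Z / F_(n+1) Z -> F_n R^t / F_(n+1) R^t.\<close>
definition gr_i_injective :: "'a::comm_ring_1 set \<Rightarrow> (nat \<Rightarrow> 'a) \<Rightarrow> nat \<Rightarrow> bool" where
  "gr_i_injective I f t \<longleftrightarrow>
     (\<forall>n. \<forall>z\<in>FZ I f t n. z \<in> Fvec I t (n + 1) \<longrightarrow> z \<in> FZ I f t (n + 1))"

text \<open>Exactness at gr(R^t) in every degree n: a class [a] (a in F_n R^t) lies in the kernel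
  of gr(frak f), i.e. sum a_i f_i in I^(n+1), iff it lies in the image of gr(i), i.e.
  a is congruent modulo F_(n+1) R^t to an element of F_n Z.\<close>
definition gr_exact_at_Rt :: "'a::comm_ring_1 set \<Rightarrow> (nat \<Rightarrow> 'a) \<Rightarrow> nat \<Rightarrow> bool" where
  "gr_exact_at_Rt I f t \<longleftrightarrow>
     (\<forall>n. \<forall>a\<in>Fvec I t n.
        fmap f t a \<in> ideal_pow I (n + 1) \<longleftrightarrow> (\<exists>z\<in>FZ I f t n. (a - z) \<in> Fvec I t (n + 1)))"

text \<open>Exactness at gr_I(R) in every degree n: for x in I^n, the class of x is killed by
  gr(pi) (i.e. pi(x) in (I/J)^(n+1), i.e. x in I^(n+1) + J) iff it is in the image of
  gr(frak f) (i.e. x is congruent mod I^(n+1) to frak f(a) with a in F_n R^t).\<close>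
definition gr_exact_at_R :: "'a::comm_ring_1 set \<Rightarrow> (nat \<Rightarrow> 'a) \<Rightarrow> nat \<Rightarrow> bool" where
  "gr_exact_at_R I f t \<longleftrightarrow>
     (\<forall>n. \<forall>x\<in>ideal_pow I n.
        x \<in> set_plus_ideal (ideal_pow I (n + 1)) (ideal_gen (f ` {..<t})) \<longleftrightarrow>
        (\<exists>a\<in>Fvec I t n. x - fmap f t a \<in> ideal_pow I (n + 1)))"

text \<open>gr(pi) is surjective in every degree n: (I/J)^n = pi(I^n), every element of it is
  congruent modulo (I/J)^(n+1) to the image of an element of I^n.\<close>
definition gr_pi_surjective :: "'a::comm_ring_1 set \<Rightarrow> (nat \<Rightarrow> 'a) \<Rightarrow> nat \<Rightarrow> bool" where
  "gr_pi_surjective I f t \<longleftrightarrow>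
     (\<forall>n. \<forall>y\<in>set_plus_ideal (ideal_pow I n) (ideal_gen (f ` {..<t})).
        \<exists>x\<in>ideal_pow I n. y - x \<in> set_plus_ideal (ideal_pow I (n + 1)) (ideal_gen (f ` {..<t})))"

definition gr_complex_exact :: "'a::comm_ring_1 set \<Rightarrow> (nat \<Rightarrow> 'a) \<Rightarrow> nat \<Rightarrow> bool" where
  "gr_complex_exact I f t \<longleftrightarrow>
     gr_i_injective I f t \<and> gr_exact_at_Rt I f t \<and> gr_exact_at_R I f t \<and> gr_pi_surjective I f t"

text \<open>For 0 \<noteq> a in Z, psi_deg a = m where m - 1 = min_j nu_I(a_j); (phi o psi)(a) is the class
  of a in F_m R^t / F_(m+1) R^t.\<close>
definition psi_deg :: "'a::comm_ring_1 set \<Rightarrow> nat \<Rightarrow> (nat \<Rightarrow> 'a) \<Rightarrow> nat \<Rightarrow> bool" where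
  "psi_deg I t a m \<longleftrightarrow> 1 \<le> m \<and> enat (m - 1) = Min ((\<lambda>j. nu I (a j)) ` {..<t})"

text \<open>A set G of nonzero syzygies a whose images (phi o psi)(a) generate the graded
  gr_I(R)-module Syz(f^*): every homogeneous element of Syz of degree n (class of b in
  F_n R^t / F_(n+1) R^t with sum b_i f_i in I^(n+1)) is a finite sum of products of
  homogeneous elements r_a in I^(n - m_a)/I^(n - m_a + 1) with the generators
  (phi o psi)(a) of degree m_a \<le> n.\<close>
definition syz_generated_by_psi :: "'a::comm_ring_1 set \<Rightarrow> (nat \<Rightarrow> 'a) \<Rightarrow> nat \<Rightarrow> (nat \<Rightarrow> 'a) set \<Rightarrow> (( nat \<Rightarrow> 'a) \<Rightarrow> nat) \<Rightarrow> bool" where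
  "syz_generated_by_psi I f t G deg \<longleftrightarrow>
     (\<forall>n. \<forall>b\<in>Fvec I t n. fmap f t b \<in> ideal_pow I (n + 1) \<longrightarrow>
        (\<exists>S r. finite S \<and> S \<subseteq> G \<and>
           (\<forall>a\<in>S. deg a \<le> n \<and> r a \<in> ideal_pow I (n - deg a)) \<and>
           (\<lambda>i. b i - (\<Sum>a\<in>S. r a * a i)) \<in> Fvec I t (n + 1)))"

definition exists_psi_generators :: "'a::comm_ring_1 set \<Rightarrow> (nat \<Rightarrow> 'a) \<Rightarrow> nat \<Rightarrow> bool" where
  "exists_psi_generators I f t \<longleftrightarrow>
     (\<exists>G deg. G \<subseteq> Zmod f t \<and> (\<forall>a\<in>G. a \<noteq> (\<lambda>_. 0)) \<and> (\<forall>a\<in>G. psi_deg I t a (deg a)) \<and>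
        syz_generated_by_psi I f t G deg)"

end

theory Submission
  imports Defs
begin

lemma ideal_gen_ideal: "is_ideal (ideal_gen S)"
  unfolding ideal_gen_def is_ideal_def by auto

lemma ideal_gen_sub: "S \<subseteq> ideal_gen S"
  unfolding ideal_gen_def by auto

lemma ideal_gen_least: "is_ideal K \<Longrightarrow> S \<subseteq> K \<Longrightarrow> ideal_gen S \<subseteq> K"
  unfolding ideal_gen_def by auto

lemma ideal_gen_mono: "S \<subseteq> T \<Longrightarrow> ideal_gen S \<subseteq> ideal_gen T"
  unfolding ideal_gen_def by auto

lemma id0: "is_ideal K \<Longrightarrow> 0 \<in> K" unfolding is_ideal_def by auto
lemma idadd: "is_ideal K \<Longrightarrow> x \<in> K \<Longrightarrow> y \<in> K \<Longrightarrow> x + y \<in> K" unfolding is_ideal_def by auto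
lemma idmul: "is_ideal K \<Longrightarrow> x \<in> K \<Longrightarrow> r * x \<in> K" unfolding is_ideal_def by auto
lemma idmul2: "is_ideal K \<Longrightarrow> x \<in> K \<Longrightarrow> x * r \<in> K"
  using idmul[of K x r] by (simp add: mult.commute)
lemma idneg: "is_ideal K \<Longrightarrow> x \<in> K \<Longrightarrow> - x \<in> K"
  using idmul[of K x "-1"] by simp
lemma iddiff: "is_ideal K \<Longrightarrow> x \<in> K \<Longrightarrow> y \<in> K \<Longrightarrow> x - y \<in> K"
  using idadd[of K x "-y"] idneg[of K y] by simp

lemma idsum: "is_ideal K \<Longrightarrow> (\<forall>a\<in>S. g a \<in> K) \<Longrightarrow> sum g S \<in> K"
  by (induct S rule: infinite_finite_induct) (auto simp: id0 idadd)

lemma ideal_mult_ideal: "is_ideal (ideal_mult I K)"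
  unfolding ideal_mult_def by (rule ideal_gen_ideal)

lemma ideal_mult_prod:
  assumes "x \<in> I" "y \<in> K" shows "x * y \<in> ideal_mult I K"
proof -
  have "x * y \<in> {x * y | x y. x \<in> I \<and> y \<in> K}" using assms by blast
  then show ?thesis unfolding ideal_mult_def by (rule subsetD[OF ideal_gen_sub])
qed

lemma ideal_mult_mono:
  assumes "I \<subseteq> I'" "K \<subseteq> K'" shows "ideal_mult I K \<subseteq> ideal_mult I' K'"
  unfolding ideal_mult_def
proof (rule ideal_gen_mono, rule subsetI)
  fix z assume "z \<in> {x * y | x y. x \<in> I \<and> y \<in> K}"
  then obtain x y where z: "z = x * y" "x \<in> I" "y \<in> K" by blast
  then have "x \<in> I'" "y \<in> K'" using assms by blast+
  then show "z \<in> {x * y | x y. x \<in> I' \<and> y \<in> K'}" using z by blast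
qed

lemma ideal_mult_least:
  assumes L: "is_ideal L" and h: "\<forall>x\<in>I. \<forall>y\<in>K. x * y \<in> L"
  shows "ideal_mult I K \<subseteq> L"
  unfolding ideal_mult_def
proof (rule ideal_gen_least[OF L], rule subsetI)
  fix z assume "z \<in> {x * y | x y. x \<in> I \<and> y \<in> K}"
  then obtain x y where z: "z = x * y" "x \<in> I" "y \<in> K" by blast
  then show "z \<in> L" using h by blast
qed

lemma pow_ideal: "is_ideal (ideal_pow I n)"
  by (cases n) (simp add: is_ideal_def, simp add: ideal_mult_ideal)

lemma pow_Suc_sub: "ideal_pow I (Suc n) \<subseteq> ideal_pow I n"
proof (induct n)
  case 0 then show ?case by simp
next
  case (Suc n)
  have "ideal_pow I (Suc (Suc n)) = ideal_mult I (ideal_pow I (Suc n))" by (rule ideal_pow.simps(2))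
  also have "\<dots> \<subseteq> ideal_mult I (ideal_pow I n)" by (rule ideal_mult_mono[OF subset_refl Suc.hyps])
  also have "\<dots> = ideal_pow I (Suc n)" by (rule ideal_pow.simps(2)[symmetric])
  finally show ?case .
qed

lemma pow_add_sub: "ideal_pow I (m + k) \<subseteq> ideal_pow I m"
proof (induct k)
  case 0 then show ?case by simp
next
  case (Suc k)
  have "ideal_pow I (m + Suc k) = ideal_pow I (Suc (m + k))" by simp
  also have "\<dots> \<subseteq> ideal_pow I (m + k)" by (rule pow_Suc_sub)
  also have "\<dots> \<subseteq> ideal_pow I m" by (rule Suc.hyps)
  finally show ?case .
qed

lemma pow_antimono: "m \<le> n \<Longrightarrow> ideal_pow I n \<subseteq> ideal_pow I m"
  using pow_add_sub[of I m "n - m"] by simp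

lemma pow_mult: "x \<in> ideal_pow I p \<Longrightarrow> y \<in> ideal_pow I q \<Longrightarrow> x * y \<in> ideal_pow I (p + q)"
proof (induct p arbitrary: x y)
  case 0 then show ?case by (simp add: idmul pow_ideal)
next
  case (Suc p)
  define P where "P = ideal_pow I (Suc (p + q))"
  have PI: "is_ideal P" unfolding P_def by (rule pow_ideal)
  let ?L = "{x. \<forall>y\<in>ideal_pow I q. x * y \<in> P}"
  have L: "is_ideal ?L"
    unfolding is_ideal_def
  proof (intro conjI allI ballI impI)
    show "0 \<in> ?L" using id0[OF PI] by simp
  next
    fix x y assume "x \<in> ?L" "y \<in> ?L"
    then show "x + y \<in> ?L"
      by (auto simp: distrib_right intro!: idadd[OF PI])
  next
    fix r x assume h: "x \<in> ?L"
    show "r * x \<in> ?L"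
    proof (rule CollectI, intro ballI)
      fix y assume "y \<in> ideal_pow I q"
      then have "x * y \<in> P" using h by blast
      then have "r * (x * y) \<in> P" by (rule idmul[OF PI])
      then show "r * x * y \<in> P" by (simp only: mult.assoc)
    qed
  qed
  have "ideal_mult I (ideal_pow I p) \<subseteq> ?L"
  proof (rule ideal_mult_least[OF L], intro ballI)
    fix u v assume u: "u \<in> I" and v: "v \<in> ideal_pow I p"
    show "u * v \<in> ?L"
    proof (rule CollectI, intro ballI)
      fix y assume y: "y \<in> ideal_pow I q"
      have "v * y \<in> ideal_pow I (p + q)" by (rule Suc.hyps[OF v y])
      then have "u * (v * y) \<in> ideal_mult I (ideal_pow I (p + q))" by (rule ideal_mult_prod[OF u])
      then show "u * v * y \<in> P" unfolding P_def by (simp only: mult.assoc ideal_pow.simps(2))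
    qed
  qed
  moreover have "x \<in> ideal_mult I (ideal_pow I p)" using Suc.prems(1) by (simp only: ideal_pow.simps(2))
  ultimately have "x \<in> ?L" by blast
  then have "x * y \<in> P" using Suc.prems(2) by blast
  then show ?case unfolding P_def by simp
qed

declare ideal_pow.simps(2)[simp del]

lemma fmap_diff: "fmap f t (a - z) = fmap f t a - fmap f t z"
  unfolding fmap_def by (simp add: sum_subtractf left_diff_distrib)

lemma J_repr:
  assumes "x \<in> ideal_gen (f ` {..<t})"
  shows "\<exists>c\<in>Rt t. x = fmap f t c"
proof -
  let ?L = "{fmap f t c | c. c \<in> Rt t}"
  have L: "is_ideal ?L"
    unfolding is_ideal_def
  proof (intro conjI allI ballI impI)
    show "0 \<in> ?L" by (rule CollectI, rule exI[of _ "\<lambda>_. 0"]) (simp add: fmap_def Rt_def)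
  next
    fix x y assume "x \<in> ?L" "y \<in> ?L"
    then obtain c d where "c \<in> Rt t" "d \<in> Rt t" "x = fmap f t c" "y = fmap f t d" by auto
    then show "x + y \<in> ?L"
      by (intro CollectI exI[of _ "\<lambda>i. c i + d i"])
        (auto simp: fmap_def Rt_def distrib_right sum.distrib)
  next
    fix r x assume "x \<in> ?L"
    then obtain c where "c \<in> Rt t" "x = fmap f t c" by auto
    then show "r * x \<in> ?L"
      by (intro CollectI exI[of _ "\<lambda>i. r * c i"])
        (auto simp: fmap_def Rt_def sum_distrib_left mult.assoc)
  qed
  have "f ` {..<t} \<subseteq> ?L"
  proof
    fix y assume "y \<in> f ` {..<t}"
    then obtain j where j: "j < t" "y = f j" by auto
    have "(\<Sum>i<t. (if i = j then 1 else 0) * f i) = (\<Sum>i<t. if i = j then f i else 0)"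
      by (rule sum.cong) auto
    also have "\<dots> = f j" using j by simp
    finally show "y \<in> ?L"
      by (intro CollectI exI[of _ "\<lambda>i. if i = j then 1 else 0"])
        (use j in \<open>auto simp: fmap_def Rt_def\<close>)
  qed
  then show ?thesis using ideal_gen_least[OF L] assms by blast
qed

lemma fmap_in_J: "fmap f t c \<in> ideal_gen (f ` {..<t})"
  unfolding fmap_def
  by (rule idsum[OF ideal_gen_ideal]) (use ideal_gen_sub[of "f ` {..<t}"] in \<open>auto intro!: idmul[OF ideal_gen_ideal]\<close>)

lemma Jmult_repr:
  assumes K: "is_ideal K" and x: "x \<in> ideal_mult (ideal_gen (f ` {..<t})) K"
  shows "\<exists>c\<in>Rt t. (\<forall>i<t. c i \<in> K) \<and> x = fmap f t c"
proof -
  let ?L = "{fmap f t c | c. c \<in> Rt t \<and> (\<forall>i<t. c i \<in> K)}"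
  have L: "is_ideal ?L"
    unfolding is_ideal_def
  proof (intro conjI allI ballI impI)
    show "0 \<in> ?L" by (rule CollectI, rule exI[of _ "\<lambda>_. 0"]) (simp add: fmap_def Rt_def id0[OF K])
  next
    fix x y assume "x \<in> ?L" "y \<in> ?L"
    then obtain c d where "c \<in> Rt t" "d \<in> Rt t" "x = fmap f t c" "y = fmap f t d"
      "\<forall>i<t. c i \<in> K" "\<forall>i<t. d i \<in> K" by auto
    then show "x + y \<in> ?L"
      by (intro CollectI exI[of _ "\<lambda>i. c i + d i"])
        (auto simp: fmap_def Rt_def distrib_right sum.distrib idadd[OF K])
  next
    fix r x assume "x \<in> ?L"
    then obtain c where "c \<in> Rt t" "x = fmap f t c" "\<forall>i<t. c i \<in> K" by auto
    then show "r * x \<in> ?L"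
      by (intro CollectI exI[of _ "\<lambda>i. r * c i"])
        (auto simp: fmap_def Rt_def sum_distrib_left mult.assoc idmul[OF K])
  qed
  have "ideal_mult (ideal_gen (f ` {..<t})) K \<subseteq> ?L"
  proof (rule ideal_mult_least[OF L], intro ballI)
    fix u y assume u: "u \<in> ideal_gen (f ` {..<t})" and y: "y \<in> K"
    obtain c where c: "c \<in> Rt t" "u = fmap f t c" using J_repr[OF u] by auto
    show "u * y \<in> ?L"
      by (intro CollectI exI[of _ "\<lambda>i. c i * y"])
        (use c y in \<open>auto simp: fmap_def Rt_def sum_distrib_right sum_distrib_left mult_ac intro: idmul[OF K] idmul2[OF K]\<close>)
  qed
  then show ?thesis using x by blast
qed

lemma fmapK_in_Jmult:
  assumes "\<forall>i<t. c i \<in> K"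
  shows "fmap f t c \<in> ideal_mult (ideal_gen (f ` {..<t})) K"
  unfolding fmap_def
proof (rule idsum[OF ideal_mult_ideal], intro ballI)
  fix i assume "i \<in> {..<t}"
  then have "f i \<in> ideal_gen (f ` {..<t})" "c i \<in> K" using ideal_gen_sub[of "f ` {..<t}"] assms by auto
  then show "c i * f i \<in> ideal_mult (ideal_gen (f ` {..<t})) K"
    using ideal_mult_prod by (metis mult.commute)
qed

lemma nu_bound:
  assumes "\<not> (\<forall>n. x \<in> ideal_pow I n)"
  shows "\<exists>b. \<forall>n. x \<in> ideal_pow I n \<longrightarrow> n \<le> b"
proof -
  obtain N where N: "x \<notin> ideal_pow I N" using assms by blast
  have "n \<le> N" if xn: "x \<in> ideal_pow I n" for n
  proof (rule ccontr)
    assume "\<not> n \<le> N"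
    then have "N \<le> n" by simp
    then have "ideal_pow I n \<subseteq> ideal_pow I N" by (rule pow_antimono)
    then show False using N xn by blast
  qed
  then show ?thesis by blast
qed

lemma nu_ge:
  assumes x: "x \<in> ideal_pow I k"
  shows "enat k \<le> nu I x"
proof (cases "\<forall>n. x \<in> ideal_pow I n")
  case True then show ?thesis by (simp add: nu_def)
next
  case False
  obtain b where b: "\<forall>n. x \<in> ideal_pow I n \<longrightarrow> n \<le> b" using nu_bound[OF False] by blast
  have "k \<le> (GREATEST n. x \<in> ideal_pow I n)"
    by (rule Greatest_le_nat[where P="\<lambda>n. x \<in> ideal_pow I n", OF x b[rule_format]])
  then show ?thesis using False by (simp add: nu_def)
qed

lemma nu_le_mem:
  assumes k: "enat k \<le> nu I x"
  shows "x \<in> ideal_pow I k"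
proof (cases "\<forall>n. x \<in> ideal_pow I n")
  case True then show ?thesis by blast
next
  case False
  let ?g = "GREATEST n. x \<in> ideal_pow I n"
  obtain b where b: "\<forall>n. x \<in> ideal_pow I n \<longrightarrow> n \<le> b" using nu_bound[OF False] by blast
  have x0: "x \<in> ideal_pow I 0" by simp
  have g: "x \<in> ideal_pow I ?g"
    by (rule GreatestI_nat[where P="\<lambda>n. x \<in> ideal_pow I n", OF x0 b[rule_format]])
  have "nu I x = enat ?g" using False by (simp add: nu_def)
  then have "k \<le> ?g" using k by simp
  then have "ideal_pow I ?g \<subseteq> ideal_pow I k" by (rule pow_antimono)
  then show ?thesis using g by blast
qed

lemma nu_eq:
  assumes a1: "x \<in> ideal_pow I k" and a2: "x \<notin> ideal_pow I (Suc k)"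
  shows "nu I x = enat k"
proof -
  have nall: "\<not> (\<forall>n. x \<in> ideal_pow I n)" using a2 by blast
  have "(GREATEST n. x \<in> ideal_pow I n) = k"
  proof (rule Greatest_equality[where P="\<lambda>n. x \<in> ideal_pow I n", OF a1])
    fix y assume xy: "x \<in> ideal_pow I y"
    show "y \<le> k"
    proof (rule ccontr)
      assume "\<not> y \<le> k"
      then have "Suc k \<le> y" by simp
      then have "ideal_pow I y \<subseteq> ideal_pow I (Suc k)" by (rule pow_antimono)
      then show False using a2 xy by blast
    qed
  qed
  then show ?thesis using nall by (simp add: nu_def)
qed

abbreviation condA where
  "condA I f t \<equiv> (\<forall>n\<ge>1. ideal_gen (f ` {..<t}) \<inter> ideal_pow I n
                  = ideal_mult (ideal_gen (f ` {..<t})) (ideal_pow I (n - 1)))"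

lemma Rt_easy:
  assumes JI: "ideal_gen (f ` {..<t}) \<subseteq> I"
    and z: "z \<in> FZ I f t n" and az: "a - z \<in> Fvec I t (n + 1)"
  shows "fmap f t a \<in> ideal_pow I (n + 1)"
proof -
  have "fmap f t a = fmap f t (a - z)" using z by (simp add: fmap_diff FZ_def Zmod_def)
  also have "\<dots> \<in> ideal_pow I (n + 1)"
    unfolding fmap_def
  proof (rule idsum[OF pow_ideal], intro ballI)
    fix i assume i: "i \<in> {..<t}"
    then have "f i \<in> I" using JI ideal_gen_sub[of "f ` {..<t}"] by blast
    moreover have "(a - z) i \<in> ideal_pow I n" using az i by (auto simp: Fvec_def)
    ultimately show "(a - z) i * f i \<in> ideal_pow I (n + 1)"
      using ideal_mult_prod by (simp add: mult.commute ideal_pow.simps(2))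
  qed
  finally show ?thesis .
qed

lemma Rt_imp_A:
  assumes JI: "ideal_gen (f ` {..<t}) \<subseteq> I" and ex: "gr_exact_at_Rt I f t"
  shows "condA I f t"
proof (intro allI impI)
  fix n :: nat assume n: "1 \<le> n"
  let ?J = "ideal_gen (f ` {..<t})"
  show "?J \<inter> ideal_pow I n = ideal_mult ?J (ideal_pow I (n - 1))"
  proof
    show "ideal_mult ?J (ideal_pow I (n - 1)) \<subseteq> ?J \<inter> ideal_pow I n"
    proof (rule Int_greatest)
      show "ideal_mult ?J (ideal_pow I (n - 1)) \<subseteq> ?J"
        by (rule ideal_mult_least[OF ideal_gen_ideal]) (auto intro: idmul2[OF ideal_gen_ideal])
      have "ideal_mult ?J (ideal_pow I (n - 1)) \<subseteq> ideal_mult I (ideal_pow I (n - 1))"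
        using JI by (rule ideal_mult_mono) auto
      also have "\<dots> = ideal_pow I n" using n by (cases n) (auto simp: ideal_pow.simps(2))
      finally show "ideal_mult ?J (ideal_pow I (n - 1)) \<subseteq> ideal_pow I n" .
    qed
  next
    show "?J \<inter> ideal_pow I n \<subseteq> ideal_mult ?J (ideal_pow I (n - 1))"
    proof
      fix x assume x: "x \<in> ?J \<inter> ideal_pow I n"
      have "k \<le> n - 1 \<Longrightarrow> \<exists>c\<in>Fvec I t (k + 1). x = fmap f t c" for k
      proof (induct k)
        case 0
        then show ?case using J_repr[of x f t] x by (auto simp: Fvec_def Rt_def)
      next
        case (Suc k)
        then obtain c where c: "c \<in> Fvec I t (k + 1)" "x = fmap f t c" by auto
        have kn: "k + 1 + 1 \<le> n" using Suc.prems n by arith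
        have "fmap f t c \<in> ideal_pow I (k + 1 + 1)"
          using x c pow_antimono[OF kn, of I] by auto
        then obtain z where z: "z \<in> FZ I f t (k + 1)" "c - z \<in> Fvec I t (k + 1 + 1)"
          using ex c unfolding gr_exact_at_Rt_def by blast
        have "x = fmap f t (c - z)" using z c by (simp add: fmap_diff FZ_def Zmod_def)
        then show ?case using z by auto
      qed
      then obtain c where c: "c \<in> Fvec I t n" "x = fmap f t c" using n by fastforce
      then show "x \<in> ideal_mult ?J (ideal_pow I (n - 1))"
        using fmapK_in_Jmult[of t c] by (auto simp: Fvec_def)
    qed
  qed
qed

lemma A_imp_Rt:
  assumes JI: "ideal_gen (f ` {..<t}) \<subseteq> I" and A: "condA I f t"
  shows "gr_exact_at_Rt I f t"
  unfolding gr_exact_at_Rt_def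
proof (intro allI ballI iffI)
  fix n a assume a: "a \<in> Fvec I t n" and fa: "fmap f t a \<in> ideal_pow I (n + 1)"
  have "fmap f t a \<in> ideal_gen (f ` {..<t}) \<inter> ideal_pow I (n + 1)"
    using fa fmap_in_J by blast
  moreover have "ideal_gen (f ` {..<t}) \<inter> ideal_pow I (n + 1) = ideal_mult (ideal_gen (f ` {..<t})) (ideal_pow I n)"
    using A[rule_format, of "n + 1"] by simp
  ultimately have "fmap f t a \<in> ideal_mult (ideal_gen (f ` {..<t})) (ideal_pow I n)"
    by blast
  then obtain c where c: "c \<in> Rt t" "\<forall>i<t. c i \<in> ideal_pow I n" "fmap f t a = fmap f t c"
    using Jmult_repr[OF pow_ideal] by blast
  have z: "a - c \<in> FZ I f t n"
    using a c pow_antimono[of "n - 1" n I]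
    by (auto simp: FZ_def Zmod_def Fvec_def Rt_def fmap_diff intro!: iddiff[OF pow_ideal])
  moreover have "a - (a - c) \<in> Fvec I t (n + 1)" using c by (auto simp: Fvec_def Rt_def)
  ultimately show "\<exists>z\<in>FZ I f t n. a - z \<in> Fvec I t (n + 1)" by blast
next
  fix n a assume "\<exists>z\<in>FZ I f t n. a - z \<in> Fvec I t (n + 1)"
  then show "fmap f t a \<in> ideal_pow I (n + 1)" using Rt_easy[OF JI] by blast
qed

lemma A_imp_R:
  assumes A: "condA I f t"
  shows "gr_exact_at_R I f t"
  unfolding gr_exact_at_R_def
proof (intro allI ballI iffI)
  fix n x assume x: "x \<in> ideal_pow I n"
    and "x \<in> set_plus_ideal (ideal_pow I (n + 1)) (ideal_gen (f ` {..<t}))"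
  then obtain y j where yj: "x = y + j" "y \<in> ideal_pow I (n + 1)" "j \<in> ideal_gen (f ` {..<t})"
    unfolding set_plus_ideal_def by auto
  have "y \<in> ideal_pow I n" using yj pow_Suc_sub by auto
  then have jn: "j \<in> ideal_pow I n" using iddiff[OF pow_ideal x] yj by (metis add_diff_cancel_left')
  show "\<exists>a\<in>Fvec I t n. x - fmap f t a \<in> ideal_pow I (n + 1)"
  proof (cases n)
    case 0
    obtain c where "c \<in> Rt t" "j = fmap f t c" using J_repr yj by blast
    then show ?thesis using yj 0 by (intro bexI[of _ c]) (auto simp: Fvec_def)
  next
    case (Suc m)
    have "j \<in> ideal_mult (ideal_gen (f ` {..<t})) (ideal_pow I m)"
      using A[rule_format, of n] jn yj Suc by auto
    then obtain c where "c \<in> Rt t" "\<forall>i<t. c i \<in> ideal_pow I m" "j = fmap f t c"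
      using Jmult_repr[OF pow_ideal] by blast
    then show ?thesis using yj Suc by (intro bexI[of _ c]) (auto simp: Fvec_def)
  qed
next
  fix n x assume "\<exists>a\<in>Fvec I t n. x - fmap f t a \<in> ideal_pow I (n + 1)"
  then obtain a where "x - fmap f t a \<in> ideal_pow I (n + 1)" by auto
  then show "x \<in> set_plus_ideal (ideal_pow I (n + 1)) (ideal_gen (f ` {..<t}))"
    unfolding set_plus_ideal_def using fmap_in_J
    by (intro CollectI exI[of _ "x - fmap f t a"] exI[of _ "fmap f t a"]) auto
qed

lemma always_inj: "gr_i_injective I f t"
  unfolding gr_i_injective_def FZ_def by auto

lemma always_surj: "gr_pi_surjective I f t"
  unfolding gr_pi_surjective_def
proof (intro allI ballI)
  fix n y assume "y \<in> set_plus_ideal (ideal_pow I n) (ideal_gen (f ` {..<t}))"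
  then obtain x j where yx: "y = x + j" and xI: "x \<in> ideal_pow I n" and jJ: "j \<in> ideal_gen (f ` {..<t})"
    unfolding set_plus_ideal_def by auto
  then show "\<exists>x\<in>ideal_pow I n. y - x \<in> set_plus_ideal (ideal_pow I (n + 1)) (ideal_gen (f ` {..<t}))"
  proof (intro bexI[of _ x])
    have "y - x = 0 + j" using yx by simp
    then show "y - x \<in> set_plus_ideal (ideal_pow I (n + 1)) (ideal_gen (f ` {..<t}))"
      unfolding set_plus_ideal_def using id0[OF pow_ideal] jJ by blast
  qed (rule xI)
qed


lemma Rt_imp_psi:
  assumes ex: "gr_exact_at_Rt I f t"
  shows "exists_psi_generators I f t"
proof -
  define G where "G = {z \<in> Zmod f t. z \<noteq> (\<lambda>_. 0) \<and> (\<exists>m. psi_deg I t z m)}"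
  define deg where "deg = (\<lambda>z. SOME m. psi_deg I t z m)"
  have degG: "psi_deg I t a (deg a)" if "a \<in> G" for a
    using that unfolding G_def deg_def by (auto intro: someI_ex)
  have uniq: "m = m'" if h: "psi_deg I t a m" "psi_deg I t a m'" for a m m'
  proof -
    have "enat (m - 1) = enat (m' - 1)" "1 \<le> m" "1 \<le> m'" using h unfolding psi_deg_def by auto
    then show ?thesis by simp
  qed
  have syz: "syz_generated_by_psi I f t G deg"
    unfolding syz_generated_by_psi_def
  proof (intro allI ballI impI)
    fix n b assume b: "b \<in> Fvec I t n" and fb: "fmap f t b \<in> ideal_pow I (n + 1)"
    obtain z where z: "z \<in> FZ I f t n" "b - z \<in> Fvec I t (n + 1)"
      using ex b fb unfolding gr_exact_at_Rt_def by blast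
    show "\<exists>S r. finite S \<and> S \<subseteq> G \<and> (\<forall>a\<in>S. deg a \<le> n \<and> r a \<in> ideal_pow I (n - deg a)) \<and>
           (\<lambda>i. b i - (\<Sum>a\<in>S. r a * a i)) \<in> Fvec I t (n + 1)"
    proof (cases "z \<in> Fvec I t (n + 1)")
      case True
      have bi: "b i \<in> ideal_pow I n" if "i < t" for i
      proof -
        have "(b - z) i \<in> ideal_pow I n" "z i \<in> ideal_pow I n"
          using True z(2) that by (auto simp: Fvec_def)
        then have "(b - z) i + z i \<in> ideal_pow I n" by (rule idadd[OF pow_ideal])
        then show ?thesis by simp
      qed
      have "b \<in> Fvec I t (n + 1)" using b bi by (auto simp: Fvec_def)
      then show ?thesis by (intro exI[of _ "{}"] exI[of _ "\<lambda>_. 0"]) simp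
    next
      case False
      then obtain j where j: "j < t" "z j \<notin> ideal_pow I n" using z(1) by (auto simp: FZ_def Fvec_def)
      have n1: "1 \<le> n"
      proof (rule ccontr)
        assume "\<not> 1 \<le> n"
        then have "n = 0" by simp
        then show False using j by simp
      qed
      have zi: "z i \<in> ideal_pow I (n - 1)" if "i < t" for i
        using z(1) that by (auto simp: FZ_def Fvec_def)
      have nuj: "nu I (z j) = enat (n - 1)"
        using nu_eq[of "z j" I "n - 1"] zi[OF j(1)] j n1 by simp
      have mem: "enat (n - 1) \<in> (\<lambda>j. nu I (z j)) ` {..<t}"
        using nuj j(1) by (metis image_eqI lessThan_iff)
      have lb: "enat (n - 1) \<le> y" if "y \<in> (\<lambda>j. nu I (z j)) ` {..<t}" for y
        using that zi nu_ge by blast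
      have ps: "psi_deg I t z n"
        unfolding psi_deg_def using n1 Min_eqI[OF _ lb mem] by simp
      have zne: "z \<noteq> (\<lambda>_. 0)" using j id0[OF pow_ideal] by force
      have zG: "z \<in> G" unfolding G_def using z(1) zne ps by (auto simp: FZ_def)
      have dz: "deg z = n" using uniq[OF degG[OF zG] ps] .
      have eq: "(\<lambda>i. b i - (\<Sum>a\<in>{z}. 1 * a i)) = b - z" by auto
      show ?thesis
        by (intro exI[of _ "{z}"] exI[of _ "\<lambda>_. 1"]) (use zG dz z(2) eq in auto)
    qed
  qed
  show ?thesis unfolding exists_psi_generators_def using degG syz
    by (intro exI[of _ G] exI[of _ deg]) (auto simp: G_def)
qed

lemma psi_imp_Rt:
  assumes JI: "ideal_gen (f ` {..<t}) \<subseteq> I" and ps: "exists_psi_generators I f t"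
  shows "gr_exact_at_Rt I f t"
proof -
  obtain G deg where GZ: "G \<subseteq> Zmod f t" and Gd: "\<forall>a\<in>G. psi_deg I t a (deg a)"
    and syz: "syz_generated_by_psi I f t G deg"
    using ps unfolding exists_psi_generators_def by (elim exE conjE)
  have aG: "a i \<in> ideal_pow I (deg a - 1)" if "a \<in> G" "i < t" for a i
  proof -
    have fin: "finite ((\<lambda>j. nu I (a j)) ` {..<t})" by simp
    have "enat (deg a - 1) = Min ((\<lambda>j. nu I (a j)) ` {..<t})"
      using Gd[rule_format, OF that(1), unfolded psi_deg_def] by (elim conjE)
    also have "\<dots> \<le> nu I (a i)" using fin that by (intro Min_le) auto
    finally show ?thesis by (rule nu_le_mem)
  qed
  show ?thesis unfolding gr_exact_at_Rt_def
  proof (intro allI ballI iffI)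
    fix n b assume b: "b \<in> Fvec I t n" and fb: "fmap f t b \<in> ideal_pow I (n + 1)"
    obtain S r where S: "finite S" "S \<subseteq> G" "\<forall>a\<in>S. deg a \<le> n \<and> r a \<in> ideal_pow I (n - deg a)"
      and bz: "(\<lambda>i. b i - (\<Sum>a\<in>S. r a * a i)) \<in> Fvec I t (n + 1)"
      using syz[unfolded syz_generated_by_psi_def, rule_format, OF b fb] by (elim exE conjE)
    define z where "z = (\<lambda>i. \<Sum>a\<in>S. r a * a i)"
    have zRt: "z \<in> Rt t"
      unfolding Rt_def z_def
    proof (intro CollectI allI impI)
      fix i assume "t \<le> i"
      then show "(\<Sum>a\<in>S. r a * a i) = 0" using S GZ by (intro sum.neutral) (auto simp: Zmod_def Rt_def)
    qed
    have fz: "fmap f t z = 0"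
    proof -
      have "fmap f t z = (\<Sum>i<t. \<Sum>a\<in>S. r a * (a i * f i))"
        unfolding z_def fmap_def by (simp add: sum_distrib_right mult.assoc)
      also have "\<dots> = (\<Sum>a\<in>S. \<Sum>i<t. r a * (a i * f i))" by (rule sum.swap)
      also have "\<dots> = (\<Sum>a\<in>S. r a * fmap f t a)" by (simp add: fmap_def sum_distrib_left)
      also have "\<dots> = 0" using S GZ by (intro sum.neutral) (auto simp: Zmod_def)
      finally show ?thesis .
    qed
    have zi: "z i \<in> ideal_pow I (n - 1)" if "i < t" for i
      unfolding z_def
    proof (rule idsum[OF pow_ideal], intro ballI)
      fix a assume a: "a \<in> S"
      have d: "deg a \<ge> 1" "deg a \<le> n" using Gd S a unfolding psi_deg_def by auto
      have ra: "r a \<in> ideal_pow I (n - deg a)" using S a by blast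
      have ai: "a i \<in> ideal_pow I (deg a - 1)" using aG S a that by blast
      have "r a * a i \<in> ideal_pow I ((n - deg a) + (deg a - 1))"
        by (rule pow_mult[OF ra ai])
      moreover have "(n - deg a) + (deg a - 1) = n - 1" using d by arith
      ultimately show "r a * a i \<in> ideal_pow I (n - 1)" by simp
    qed
    have "z \<in> FZ I f t n" using zRt fz zi by (auto simp: FZ_def Zmod_def Fvec_def)
    moreover have "b - z \<in> Fvec I t (n + 1)" using bz by (simp add: z_def fun_diff_def)
    ultimately show "\<exists>z\<in>FZ I f t n. b - z \<in> Fvec I t (n + 1)" by blast
  next
    fix n a assume "\<exists>z\<in>FZ I f t n. a - z \<in> Fvec I t (n + 1)"
    then show "fmap f t a \<in> ideal_pow I (n + 1)" using Rt_easy[OF JI] by blast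
  qed
qed

theorem theorem1p4:
  fixes I :: "'a::comm_ring_1 set" and f :: "nat \<Rightarrow> 'a" and t :: nat
  assumes noeth: "noetherian_ring TYPE('a)"
    and loc: "local_ring TYPE('a)"
    and I_ideal: "is_ideal I"
    and J_sub: "ideal_gen (f ` {..<t}) \<subseteq> I"
    and ord1: "\<forall>i<t. nu I (f i) = 1"
  shows "((\<forall>n\<ge>1. ideal_gen (f ` {..<t}) \<inter> ideal_pow I n
                  = ideal_mult (ideal_gen (f ` {..<t})) (ideal_pow I (n - 1)))
           \<longleftrightarrow> gr_complex_exact I f t)
       \<and> (gr_complex_exact I f t \<longleftrightarrow> exists_psi_generators I f t)"
proof -
  have e1: "gr_complex_exact I f t \<longleftrightarrow> gr_exact_at_Rt I f t"
  proof
    assume "gr_complex_exact I f t"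
    then show "gr_exact_at_Rt I f t" unfolding gr_complex_exact_def by simp
  next
    assume h: "gr_exact_at_Rt I f t"
    have "condA I f t" by (rule Rt_imp_A[OF J_sub h])
    then have "gr_exact_at_R I f t" by (rule A_imp_R)
    then show "gr_complex_exact I f t"
      unfolding gr_complex_exact_def using h always_inj[of I f t] always_surj[of I f t] by simp
  qed
  have e2: "condA I f t \<longleftrightarrow> gr_exact_at_Rt I f t"
  proof
    assume "condA I f t" then show "gr_exact_at_Rt I f t" by (rule A_imp_Rt[OF J_sub])
  next
    assume "gr_exact_at_Rt I f t" then show "condA I f t" by (rule Rt_imp_A[OF J_sub])
  qed
  have e3: "gr_exact_at_Rt I f t \<longleftrightarrow> exists_psi_generators I f t"
  proof
    assume "gr_exact_at_Rt I f t" then show "exists_psi_generators I f t" by (rule Rt_imp_psi)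
  next
    assume "exists_psi_generators I f t" then show "gr_exact_at_Rt I f t" by (rule psi_imp_Rt[OF J_sub])
  qed
  show ?thesis using e1 e2 e3 by simp
qed

end
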